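(* Let $1<p<\infty$. Then, for any $f\in L^p(0,\infty)$, $$ \int_0^\infty \sup_{0<s<\infty} \left| \min\left\{ \frac1r,\frac1s \right\} \int_0^s f(t)\,dt \right|^p dr \leq \left( \frac{p}{p-1}\right)^p \int_0^\infty |f(r)|^p\,dr \,. $$ *)

theory Defs
  imports "HOL-Analysis.Analysis"
begin

end

theory Submission
  imports Defs
begin

lemma LC:
  fixes q a :: real
  assumes q: "0 < q" and a: "0 \<le> a"
  shows "(\<integral>\<^sup>+ l. ennreal (q * l powr (q - 1)) * indicator {0<..<a} l \<partial>lborel) = ennreal (a powr q)"
proof -
  have "((\<lambda>l. q * l powr (q - 1)) has_integral (a powr q - 0 powr q)) {0..a}"
  proof (rule fundamental_theorem_of_calculus_interior[OF a])
    show "continuous_on {0..a} (\<lambda>l. l powr q)"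
      by (rule continuous_on_powr') (use q in \<open>auto intro: continuous_intros\<close>)
    fix x assume "x \<in> {0<..<a}"
    then show "((\<lambda>l. l powr q) has_vector_derivative q * x powr (q - 1)) (at x)"
      by (auto simp: has_real_derivative_iff_has_vector_derivative[symmetric] intro!: has_real_derivative_powr)
  qed
  then have "((\<lambda>l. q * l powr (q - 1)) has_integral (a powr q)) {0<..<a}"
    using q by (simp add: has_integral_Icc_iff_Ioo)
  then show ?thesis
    by (subst nn_integral_has_integral_lebesgue') (use q in auto)
qed

lemma ind_swap: "indicator {0<..<(H x::real)} l * indicator {0<..} (x::real) =
   (indicator {0<..} l * indicator {x. 0 < x \<and> l < H x} x :: ennreal)"
  by (auto simp: indicator_def)

lemma weak_to_strong:
  fixes H g :: "real \<Rightarrow> real" and p :: real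
  assumes p: "1 < p" and Hm[measurable]: "H \<in> borel_measurable borel"
    and gm[measurable]: "g \<in> borel_measurable borel"
    and H0: "\<And>x. 0 \<le> H x" and g0: "\<And>x. 0 \<le> g x"
    and W: "\<And>l. 0 < l \<Longrightarrow> ennreal l * emeasure lborel {x. 0 < x \<and> l < H x}
              \<le> (\<integral>\<^sup>+x. ennreal (g x) * indicator {x. 0 < x \<and> l < H x} x \<partial>lborel)"
  shows "(\<integral>\<^sup>+x. ennreal (H x powr p) * indicator {0<..} x \<partial>lborel)
     \<le> ennreal (p / (p - 1)) * (\<integral>\<^sup>+x. ennreal (g x * H x powr (p - 1)) * indicator {0<..} x \<partial>lborel)"
proof -
  have S[measurable]: "{x. 0 < x \<and> l < H x} \<in> sets lborel" for l
    by measurable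
  have 1: "ennreal (H x powr p) = (\<integral>\<^sup>+l. ennreal (p * l powr (p - 1)) * indicator {0<..<H x} l \<partial>lborel)" for x
    using LC[of p "H x"] p H0[of x] by simp
  have 2: "ennreal (p / (p - 1)) * ennreal (H x powr (p - 1)) =
     (\<integral>\<^sup>+l. ennreal (p * l powr (p - 2)) * indicator {0<..<H x} l \<partial>lborel)" for x
  proof -
    have "ennreal (H x powr (p - 1)) = (\<integral>\<^sup>+l. ennreal ((p - 1) * l powr (p - 2)) * indicator {0<..<H x} l \<partial>lborel)"
      using LC[of "p - 1" "H x"] p H0[of x] by (simp add: algebra_simps)
    then have "ennreal (p / (p - 1)) * ennreal (H x powr (p - 1)) =
       (\<integral>\<^sup>+l. ennreal (p / (p - 1)) * (ennreal ((p - 1) * l powr (p - 2)) * indicator {0<..<H x} l) \<partial>lborel)"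
      by (simp add: nn_integral_cmult)
    also have "\<dots> = (\<integral>\<^sup>+l. ennreal (p * l powr (p - 2)) * indicator {0<..<H x} l \<partial>lborel)"
    proof (rule nn_integral_cong)
      fix l :: real
      have "ennreal (p / (p - 1)) * ennreal ((p - 1) * l powr (p - 2)) = ennreal (p / (p - 1) * ((p - 1) * l powr (p - 2)))"
        using p by (subst ennreal_mult[symmetric]) auto
      also have "\<dots> = ennreal (p * l powr (p - 2))"
      proof -
        have "p - 1 \<noteq> 0" using p by simp
        then have "p / (p - 1) * ((p - 1) * l powr (p - 2)) = p * l powr (p - 2)" by simp
        then show ?thesis by simp
      qed
      finally show "ennreal (p / (p - 1)) * (ennreal ((p - 1) * l powr (p - 2)) * indicator {0<..<H x} l) =
          ennreal (p * l powr (p - 2)) * indicator {0<..<H x} l"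
        by (simp add: mult.assoc[symmetric])
    qed
    finally show ?thesis .
  qed
  have "(\<integral>\<^sup>+x. ennreal (H x powr p) * indicator {0<..} x \<partial>lborel)
      = (\<integral>\<^sup>+x. \<integral>\<^sup>+l. ennreal (p * l powr (p - 1)) * (indicator {0<..<H x} l * indicator {0<..} x) \<partial>lborel \<partial>lborel)"
    apply (rule nn_integral_cong)
    apply (subst 1)
    apply (subst nn_integral_multc[symmetric])
     apply (simp_all add: mult.assoc)
    done
  also have "\<dots> = (\<integral>\<^sup>+l. \<integral>\<^sup>+x. ennreal (p * l powr (p - 1)) * (indicator {0<..<H x} l * indicator {0<..} x) \<partial>lborel \<partial>lborel)"
  proof -
    have "(\<lambda>(x, l). ennreal (p * l powr (p - 1)) * (indicator {0<..<H x} l * indicator {0<..} x :: ennreal))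
       = (\<lambda>z. ennreal (p * snd z powr (p - 1)) * (if 0 < snd z \<and> snd z < H (fst z) \<and> 0 < fst z then 1 else 0))"
      by (auto simp: indicator_def fun_eq_iff)
    moreover have "(\<lambda>z. ennreal (p * snd z powr (p - 1)) * (if 0 < snd z \<and> snd z < H (fst z) \<and> 0 < fst z then 1 else 0))
       \<in> borel_measurable (lborel \<Otimes>\<^sub>M lborel)" by measurable
    ultimately have "(\<lambda>(x, l). ennreal (p * l powr (p - 1)) * (indicator {0<..<H x} l * indicator {0<..} x :: ennreal))
       \<in> borel_measurable (lborel \<Otimes>\<^sub>M lborel)" by simp
    from lborel_pair.Fubini'[OF this] show ?thesis by simp
  qed
  also have "\<dots> = (\<integral>\<^sup>+l. ennreal (p * l powr (p - 1)) * indicator {0<..} l * emeasure lborel {x. 0 < x \<and> l < H x} \<partial>lborel)"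
    by (simp add: ind_swap nn_integral_cmult mult.assoc)
  also have "\<dots> \<le> (\<integral>\<^sup>+l. ennreal (p * l powr (p - 2)) * indicator {0<..} l * (\<integral>\<^sup>+x. ennreal (g x) * indicator {x. 0 < x \<and> l < H x} x \<partial>lborel) \<partial>lborel)"
  proof (rule nn_integral_mono)
    fix l :: real
    show "ennreal (p * l powr (p - 1)) * indicator {0<..} l * emeasure lborel {x. 0 < x \<and> l < H x}
         \<le> ennreal (p * l powr (p - 2)) * indicator {0<..} l * (\<integral>\<^sup>+x. ennreal (g x) * indicator {x. 0 < x \<and> l < H x} x \<partial>lborel)"
    proof (cases "0 < l")
      case True
      have "ennreal (p * l powr (p - 1)) = ennreal (p * l powr (p - 2)) * ennreal l"
        using True p by (subst ennreal_mult[symmetric]) (auto simp: powr_diff field_simps powr_numeral power2_eq_square)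
      then show ?thesis using True W[OF True]
        by (simp add: mult.assoc mult_left_mono)
    qed simp
  qed
  also have "\<dots> = (\<integral>\<^sup>+l. \<integral>\<^sup>+x. ennreal (g x) * indicator {0<..} x * (ennreal (p * l powr (p - 2)) * indicator {0<..<H x} l) \<partial>lborel \<partial>lborel)"
    apply (rule nn_integral_cong)
    apply (subst nn_integral_cmult[symmetric], simp)
    apply (rule nn_integral_cong)
    apply (auto simp: indicator_def mult.commute)
    done
  also have "\<dots> = (\<integral>\<^sup>+x. \<integral>\<^sup>+l. ennreal (g x) * indicator {0<..} x * (ennreal (p * l powr (p - 2)) * indicator {0<..<H x} l) \<partial>lborel \<partial>lborel)"
  proof -
    have "(\<lambda>(x, l). ennreal (g x) * indicator {0<..} x * (ennreal (p * l powr (p - 2)) * indicator {0<..<H x} l) :: ennreal)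
       = (\<lambda>z. ennreal (g (fst z)) * ennreal (p * snd z powr (p - 2)) * (if 0 < snd z \<and> snd z < H (fst z) \<and> 0 < fst z then 1 else 0))"
      by (auto simp: indicator_def fun_eq_iff)
    moreover have "(\<lambda>z. ennreal (g (fst z)) * ennreal (p * snd z powr (p - 2)) * (if 0 < snd z \<and> snd z < H (fst z) \<and> 0 < fst z then 1 else 0))
       \<in> borel_measurable (lborel \<Otimes>\<^sub>M lborel)" by measurable
    ultimately have "(\<lambda>(x, l). ennreal (g x) * indicator {0<..} x * (ennreal (p * l powr (p - 2)) * indicator {0<..<H x} l) :: ennreal)
       \<in> borel_measurable (lborel \<Otimes>\<^sub>M lborel)" by simp
    from lborel_pair.Fubini'[OF this] show ?thesis by simp
  qed
  also have "\<dots> = (\<integral>\<^sup>+x. ennreal (g x) * indicator {0<..} x * (ennreal (p / (p - 1)) * ennreal (H x powr (p - 1))) \<partial>lborel)"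
    by (simp add: nn_integral_cmult 2)
  also have "\<dots> = ennreal (p / (p - 1)) * (\<integral>\<^sup>+x. ennreal (g x * H x powr (p - 1)) * indicator {0<..} x \<partial>lborel)"
    apply (subst nn_integral_cmult[symmetric], simp)
    apply (rule nn_integral_cong)
    apply (simp add: ennreal_mult g0 mult_ac)
    done
  finally show ?thesis .
qed

lemma ennreal_lin:
  fixes a x b y :: real
  assumes "0 \<le> a" "0 \<le> x" "0 \<le> b" "0 \<le> y"
  shows "ennreal (a * x + b * y) = ennreal a * ennreal x + ennreal b * ennreal y"
  using assms by (simp add: ennreal_plus ennreal_mult)

lemma young_pt:
  fixes p g h :: real
  assumes p: "1 < p" and g: "0 \<le> g" and h: "0 \<le> h"
  shows "p / (p - 1) * g * h powr (p - 1) \<le> (p / (p - 1)) powr p / p * g powr p + (p - 1) / p * h powr p"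
proof -
  have q: "1 < p / (p - 1)" using p by (simp add: field_simps)
  have e: "1 / p + 1 / (p / (p - 1)) = 1" using p by (simp add: field_simps)
  have "p / (p - 1) * g * h powr (p - 1) \<le> (p / (p - 1) * g) powr p / p + (h powr (p - 1)) powr (p / (p - 1)) / (p / (p - 1))"
    using Youngs_inequality[OF p q e, of "p / (p - 1) * g" "h powr (p - 1)"] p g by simp
  also have "(h powr (p - 1)) powr (p / (p - 1)) = h powr p"
    using p by (simp add: powr_powr)
  also have "(p / (p - 1) * g) powr p = (p / (p - 1)) powr p * g powr p"
    by (rule powr_mult)
  finally show ?thesis using p by (simp add: field_simps)
qed

lemma young_step:
  fixes H g :: "real \<Rightarrow> real" and p :: real
  assumes p: "1 < p" and Hm[measurable]: "H \<in> borel_measurable borel"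
    and gm[measurable]: "g \<in> borel_measurable borel"
    and H0: "\<And>x. 0 \<le> H x" and g0: "\<And>x. 0 \<le> g x"
    and W: "\<And>l. 0 < l \<Longrightarrow> ennreal l * emeasure lborel {x. 0 < x \<and> l < H x}
              \<le> (\<integral>\<^sup>+x. ennreal (g x) * indicator {x. 0 < x \<and> l < H x} x \<partial>lborel)"
    and fin: "(\<integral>\<^sup>+x. ennreal (H x powr p) * indicator {0<..} x \<partial>lborel) < \<infinity>"
  shows "(\<integral>\<^sup>+x. ennreal (H x powr p) * indicator {0<..} x \<partial>lborel)
     \<le> ennreal ((p / (p - 1)) powr p) * (\<integral>\<^sup>+x. ennreal (g x powr p) * indicator {0<..} x \<partial>lborel)"
proof -
  define A where "A = (\<integral>\<^sup>+x. ennreal (H x powr p) * indicator {0<..} x \<partial>lborel)"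
  define B where "B = (\<integral>\<^sup>+x. ennreal (g x powr p) * indicator {0<..} x \<partial>lborel)"
  define c where "c = (p / (p - 1)) powr p"
  have c0: "0 < c" using p by (simp add: c_def)
  have "A \<le> ennreal (p / (p - 1)) * (\<integral>\<^sup>+x. ennreal (g x * H x powr (p - 1)) * indicator {0<..} x \<partial>lborel)"
    unfolding A_def by (rule weak_to_strong[OF p Hm gm H0 g0 W])
  also have "\<dots> = (\<integral>\<^sup>+x. ennreal (p / (p - 1) * g x * H x powr (p - 1)) * indicator {0<..} x \<partial>lborel)"
    apply (subst nn_integral_cmult[symmetric], simp)
    apply (rule nn_integral_cong)
    subgoal for x
    proof -
      have e: "ennreal (p / (p - 1) * g x * H x powr (p - 1)) = ennreal (p / (p - 1)) * ennreal (g x * H x powr (p - 1))"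
        unfolding mult.assoc by (rule ennreal_mult) (use p g0[of x] H0[of x] in auto)
      show ?thesis by (subst e) (simp only: mult.assoc)
    qed
    done
  also have "\<dots> \<le> (\<integral>\<^sup>+x. ennreal (c / p) * (ennreal (g x powr p) * indicator {0<..} x) + ennreal ((p - 1) / p) * (ennreal (H x powr p) * indicator {0<..} x) \<partial>lborel)"
  proof (rule nn_integral_mono)
    fix x
    have "ennreal (p / (p - 1) * g x * H x powr (p - 1)) \<le> ennreal (c / p * g x powr p + (p - 1) / p * H x powr p)"
      using young_pt[OF p g0[of x] H0[of x]] unfolding c_def by (rule ennreal_leI)
    also have "\<dots> = ennreal (c / p) * ennreal (g x powr p) + ennreal ((p - 1) / p) * ennreal (H x powr p)"
      using p c0 g0[of x] H0[of x] by (intro ennreal_lin) auto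
    finally show "ennreal (p / (p - 1) * g x * H x powr (p - 1)) * indicator {0<..} x
       \<le> ennreal (c / p) * (ennreal (g x powr p) * indicator {0<..} x) + ennreal ((p - 1) / p) * (ennreal (H x powr p) * indicator {0<..} x)"
      by (auto simp: indicator_def)
  qed
  also have "\<dots> = ennreal (c / p) * B + ennreal ((p - 1) / p) * A"
    unfolding A_def B_def
    by (subst nn_integral_add) (auto simp: nn_integral_cmult)
  finally have ineq: "A \<le> ennreal (c / p) * B + ennreal ((p - 1) / p) * A" .
  show ?thesis
  proof (cases "B = \<infinity>")
    case True
    then show ?thesis using c0 by (simp add: B_def[symmetric] A_def[symmetric] c_def[symmetric] ennreal_mult_top)
  next
    case False
    then obtain b where b: "B = ennreal b" "0 \<le> b" by (cases B) auto
    from fin obtain a where a: "A = ennreal a" "0 \<le> a" unfolding A_def[symmetric] by (cases A) auto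
    have e1: "ennreal (c / p) * ennreal b + ennreal ((p - 1) / p) * ennreal a = ennreal (c / p * b + (p - 1) / p * a)"
      using p c0 a b by (intro ennreal_lin[symmetric]) auto
    have "ennreal a \<le> ennreal (c / p * b + (p - 1) / p * a)"
      using ineq unfolding a(1) b(1) e1 .
    then have "a \<le> c / p * b + (p - 1) / p * a"
      using p c0 b a by (subst (asm) ennreal_le_iff) auto
    then have "a / p \<le> c / p * b" using p by (simp add: field_simps)
    then have "a \<le> c * b" using p by (simp add: field_simps)
    moreover have "ennreal c * ennreal b = ennreal (c * b)" using c0 b by (simp add: ennreal_mult)
    ultimately have "A \<le> ennreal c * B" unfolding a(1) b(1) by (simp add: ennreal_leI)
    then show ?thesis by (simp add: A_def B_def c_def)
  qed
qed

lemma pt_bound: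
  fixes p d g :: real
  assumes p: "1 < p" and d: "0 < d" and g: "0 \<le> g"
  shows "g \<le> d + d powr (1 - p) * g powr p"
proof (cases "g \<le> d")
  case True
  then show ?thesis using d by (simp add: add_increasing2)
next
  case False
  then have gd: "d < g" by simp
  have "d powr (p - 1) \<le> g powr (p - 1)" using gd d p by (intro powr_mono2) auto
  then have "g * d powr (p - 1) \<le> g * g powr (p - 1)" using g by (rule mult_left_mono)
  also have "g * g powr (p - 1) = g powr p" using gd d by (simp add: powr_diff field_simps)
  finally have "g * d powr (p - 1) \<le> g powr p" .
  then have "d powr (1 - p) * (g * d powr (p - 1)) \<le> d powr (1 - p) * g powr p"
    by (rule mult_left_mono) simp
  moreover have "d powr (1 - p) * (g * d powr (p - 1)) = g"
    using d by (simp add: powr_diff field_simps powr_minus)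
  ultimately show ?thesis using d by simp
qed

theorem theorem2p1:
  fixes p :: real and f :: "real \<Rightarrow> real"
  assumes p: "1 < p"
    and meas: "set_borel_measurable lborel {0<..} f"
    and Lp: "(\<integral>\<^sup>+ r\<in>{0<..}. ennreal (\<bar>f r\<bar> powr p) \<partial>lborel) < \<infinity>"
  shows "(\<integral>\<^sup>+ r\<in>{0<..}.
            (SUP s\<in>{0<..}. ennreal (\<bar>min (1 / r) (1 / s) * (\<integral> t\<in>{0<..s}. f t \<partial>lborel)\<bar> powr p))
          \<partial>lborel)
         \<le> ennreal ((p / (p - 1)) powr p) * (\<integral>\<^sup>+ r\<in>{0<..}. ennreal (\<bar>f r\<bar> powr p) \<partial>lborel)"
proof -
  define f0 where "f0 x = indicator {0<..} x * f x" for x :: real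
  have f0m[measurable]: "f0 \<in> borel_measurable borel"
    using meas unfolding f0_def set_borel_measurable_def by simp
  define g where "g x = \<bar>f0 x\<bar>" for x
  have gm[measurable]: "g \<in> borel_measurable borel" unfolding g_def by measurable
  have g0: "0 \<le> g x" for x unfolding g_def by simp
  have gpos: "0 < x \<Longrightarrow> g x = \<bar>f x\<bar>" for x unfolding g_def f0_def by simp
  have gneg: "\<not> 0 < x \<Longrightarrow> g x = 0" for x unfolding g_def f0_def by simp
  define B where "B = (\<integral>\<^sup>+x. ennreal (g x powr p) * indicator {0<..} x \<partial>lborel)"
  have B_eq: "(\<integral>\<^sup>+ r\<in>{0<..}. ennreal (\<bar>f r\<bar> powr p) \<partial>lborel) = B"
    unfolding B_def by (rule nn_integral_cong) (auto simp: indicator_def gpos)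
  obtain b where b: "B = ennreal b" "0 \<le> b"
    using Lp unfolding B_eq by (cases B) auto
  define \<Phi> where "\<Phi> s = (\<integral>\<^sup>+t. ennreal (g t) * indicator {0<..s} t \<partial>lborel)" for s
  have K4: "\<Phi> s \<le> ennreal (d * s + d powr (1 - p) * b)" if d: "0 < d" and s: "0 \<le> s" for d s
  proof -
    have "\<Phi> s \<le> (\<integral>\<^sup>+t. ennreal d * indicator {0<..s} t + ennreal (d powr (1 - p)) * (ennreal (g t powr p) * indicator {0<..} t) \<partial>lborel)"
      unfolding \<Phi>_def
    proof (rule nn_integral_mono)
      fix t
      have "ennreal (g t) \<le> ennreal (d + d powr (1 - p) * g t powr p)"
        using pt_bound[OF p d g0[of t]] by (rule ennreal_leI)
      also have "\<dots> = ennreal d + ennreal (d powr (1 - p)) * ennreal (g t powr p)"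
        using d by (simp add: ennreal_plus ennreal_mult)
      finally show "ennreal (g t) * indicator {0<..s} t \<le> ennreal d * indicator {0<..s} t + ennreal (d powr (1 - p)) * (ennreal (g t powr p) * indicator {0<..} t)"
        by (auto simp: indicator_def)
    qed
    also have "\<dots> = ennreal d * ennreal s + ennreal (d powr (1 - p)) * B"
      unfolding B_def using s by (subst nn_integral_add) (auto simp: nn_integral_cmult)
    also have "\<dots> = ennreal (d * s + d powr (1 - p) * b)"
      using d s b by (simp add: ennreal_plus ennreal_mult)
    finally show ?thesis .
  qed
  have \<Phi>fin: "\<Phi> s < \<infinity>" if "0 \<le> s" for s
    by (rule le_less_trans[OF K4[of 1 s]]) (use that in auto)
  define \<phi> where "\<phi> s = enn2real (\<Phi> s)" for s
  have \<Phi>\<phi>: "\<Phi> s = ennreal (\<phi> s)" if "0 \<le> s" for s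
    unfolding \<phi>_def using \<Phi>fin[OF that] by simp
  have \<phi>0: "0 \<le> \<phi> s" for s unfolding \<phi>_def by simp
  have \<phi>mono: "\<phi> s \<le> \<phi> s'" if "0 \<le> s" "s \<le> s'" for s s'
  proof -
    have "\<Phi> s \<le> \<Phi> s'" unfolding \<Phi>_def
      by (rule nn_integral_mono) (use that in \<open>auto simp: indicator_def\<close>)
    then show ?thesis unfolding \<phi>_def using \<Phi>fin[of s'] that by (intro enn2real_mono) auto
  qed
  have \<phi>bound: "\<phi> s \<le> d * s + d powr (1 - p) * b" if "0 < d" "0 \<le> s" for d s
  proof -
    have "ennreal (\<phi> s) \<le> ennreal (d * s + d powr (1 - p) * b)"
      using K4[OF that] unfolding \<Phi>\<phi>[OF that(2)] .
    then show ?thesis by (subst (asm) ennreal_le_iff) (use that b in auto)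
  qed
  have Fb: "\<bar>(\<integral> t\<in>{0<..s}. f t \<partial>lborel)\<bar> \<le> \<phi> s" if s: "0 < s" for s
  proof -
    have eq: "(\<lambda>t. indicator {0<..s} t *\<^sub>R f t) = (\<lambda>t. indicator {0<..s} t * f0 t)"
      using s by (auto simp: fun_eq_iff indicator_def f0_def)
    have "\<bar>(\<integral> t\<in>{0<..s}. f t \<partial>lborel)\<bar> = norm (\<integral> t. indicator {0<..s} t * f0 t \<partial>lborel)"
      unfolding set_lebesgue_integral_def eq by simp
    also have "\<dots> \<le> (\<integral> t. norm (indicator {0<..s} t * f0 t) \<partial>lborel)"
      by (rule integral_norm_bound)
    also have "\<dots> = enn2real (\<integral>\<^sup>+t. ennreal (norm (indicator {0<..s} t * f0 t)) \<partial>lborel)"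
      by (rule integral_eq_nn_integral) auto
    also have "(\<integral>\<^sup>+t. ennreal (norm (indicator {0<..s} t * f0 t)) \<partial>lborel) = \<Phi> s"
      unfolding \<Phi>_def by (rule nn_integral_cong) (auto simp: indicator_def g_def)
    finally show ?thesis unfolding \<phi>_def .
  qed

  define G where "G r = (SUP s\<in>{0<..}. ennreal (min (1 / r) (1 / s) * \<phi> s))" for r
  have Gle: "ennreal (min (1 / r) (1 / s) * \<phi> s) \<le> G r" if "0 < s" for r s
    unfolding G_def by (rule SUP_upper) (use that in auto)
  have Ganti: "G r \<le> G r'" if "0 < r'" "r' \<le> r" for r r'
    unfolding G_def[of r]
  proof (rule SUP_least)
    fix s :: real assume s: "s \<in> {0<..}"
    have "min (1 / r) (1 / s) \<le> min (1 / r') (1 / s)"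
      using that by (auto simp: min_def divide_simps)
    then have "min (1 / r) (1 / s) * \<phi> s \<le> min (1 / r') (1 / s) * \<phi> s"
      by (rule mult_right_mono) (rule \<phi>0)
    then have "ennreal (min (1 / r) (1 / s) * \<phi> s) \<le> ennreal (min (1 / r') (1 / s) * \<phi> s)"
      by (rule ennreal_leI)
    also have "\<dots> \<le> G r'" using s by (intro Gle) auto
    finally show "ennreal (min (1 / r) (1 / s) * \<phi> s) \<le> G r'" .
  qed
  define S where "S \<mu> = {r. 0 < r \<and> ennreal \<mu> < G r}" for \<mu>
  have Sdown: "r' \<in> S \<mu>" if "r \<in> S \<mu>" "0 < r'" "r' \<le> r" for r r' \<mu>
    using that Ganti[of r' r] unfolding S_def by auto
  have K1: "\<exists>s'. r \<le> s' \<and> s' \<in> S \<mu> \<and> \<mu> * s' < \<phi> s'" if mu: "0 < \<mu>" and r: "r \<in> S \<mu>" for r \<mu>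
  proof -
    from r have r0: "0 < r" and "ennreal \<mu> < G r" unfolding S_def by auto
    then obtain s where s: "0 < s" and lt: "ennreal \<mu> < ennreal (min (1 / r) (1 / s) * \<phi> s)"
      unfolding G_def less_SUP_iff by auto
    have lt': "\<mu> < min (1 / r) (1 / s) * \<phi> s"
      using lt mu by (subst (asm) ennreal_less_iff) auto
    show ?thesis
    proof (cases "r \<le> s")
      case True
      then have "min (1 / r) (1 / s) = 1 / s" using r0 by (auto simp: min_def divide_simps)
      then have m: "\<mu> < \<phi> s / s" using lt' by simp
      then have "\<mu> * s < \<phi> s" using s by (simp add: field_simps)
      moreover have "s \<in> S \<mu>"
      proof -
        have "ennreal \<mu> < ennreal (min (1 / s) (1 / s) * \<phi> s)"
          using m mu by (subst ennreal_less_iff) auto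
        also have "\<dots> \<le> G s" using s by (rule Gle)
        finally show ?thesis unfolding S_def using s by auto
      qed
      ultimately show ?thesis using True by blast
    next
      case False
      then have "min (1 / r) (1 / s) = 1 / r" using s by (auto simp: min_def divide_simps)
      then have m: "\<mu> < \<phi> s / r" using lt' by simp
      also have "\<phi> s / r \<le> \<phi> r / r" using False s r0 by (intro divide_right_mono \<phi>mono) auto
      finally have m2: "\<mu> < \<phi> r / r" .
      then have "\<mu> * r < \<phi> r" using r0 by (simp add: field_simps)
      then show ?thesis using r by blast
    qed
  qed
  have Sbound: "S \<mu> \<subseteq> {0<..2 * (\<mu> / 2) powr (1 - p) * b / \<mu>}" if mu: "0 < \<mu>" for \<mu>
  proof
    fix r assume r: "r \<in> S \<mu>"
    then have r0: "0 < r" unfolding S_def by auto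
    obtain s' where s': "r \<le> s'" "s' \<in> S \<mu>" "\<mu> * s' < \<phi> s'" using K1[OF mu r] by blast
    have "\<phi> s' \<le> \<mu> / 2 * s' + (\<mu> / 2) powr (1 - p) * b" using mu r0 s' by (intro \<phi>bound) auto
    with s' have "\<mu> / 2 * s' < (\<mu> / 2) powr (1 - p) * b" by simp
    then have "s' < 2 * (\<mu> / 2) powr (1 - p) * b / \<mu>" using mu by (simp add: field_simps)
    then show "r \<in> {0<..2 * (\<mu> / 2) powr (1 - p) * b / \<mu>}" using r0 s' by auto
  qed

  have Weak: "ennreal \<mu> * emeasure lborel (S \<mu>) \<le> (\<integral>\<^sup>+x. ennreal (g x) * indicator (S \<mu>) x \<partial>lborel)"
    if mu: "0 < \<mu>" for \<mu>
  proof -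
    define I where "I = (\<integral>\<^sup>+x. ennreal (g x) * indicator (S \<mu>) x \<partial>lborel)"
    have bnd: "ennreal (\<mu> * r) \<le> I" if r: "r \<in> S \<mu>" for r
    proof -
      obtain s' where s': "r \<le> s'" "s' \<in> S \<mu>" "\<mu> * s' < \<phi> s'" using K1[OF mu r] by blast
      have r0: "0 < r" using r unfolding S_def by auto
      have "ennreal (\<mu> * r) \<le> ennreal (\<phi> s')"
        using s' mu r0 by (intro ennreal_leI) (smt (verit, best) mult_left_mono)
      also have "\<dots> = \<Phi> s'" using r0 s' by (intro \<Phi>\<phi>[symmetric]) auto
      also have "\<dots> \<le> I" unfolding \<Phi>_def I_def
      proof (rule nn_integral_mono)
        fix t
        show "ennreal (g t) * indicator {0<..s'} t \<le> ennreal (g t) * indicator (S \<mu>) t"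
          using Sdown[OF s'(2), of t] by (auto simp: indicator_def)
      qed
      finally show ?thesis .
    qed
    show ?thesis
    proof (cases "I = \<infinity>")
      case True
      then show ?thesis unfolding I_def by simp
    next
      case False
      then obtain i where i: "I = ennreal i" "0 \<le> i" by (cases I) auto
      have sub: "S \<mu> \<subseteq> {0<..i / \<mu>}"
      proof
        fix r assume r: "r \<in> S \<mu>"
        have "\<mu> * r \<le> i" using bnd[OF r] i by simp
        then show "r \<in> {0<..i / \<mu>}" using r mu unfolding S_def by (auto simp: field_simps)
      qed
      have "emeasure lborel (S \<mu>) \<le> emeasure lborel {0<..i / \<mu>}"
        by (rule emeasure_mono[OF sub]) simp
      also have "\<dots> = ennreal (i / \<mu>)" using i mu by simp
      finally have "ennreal \<mu> * emeasure lborel (S \<mu>) \<le> ennreal \<mu> * ennreal (i / \<mu>)"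
        by (rule mult_left_mono) simp
      also have "\<dots> = ennreal i" using mu i by (simp add: ennreal_mult[symmetric])
      finally show ?thesis using i unfolding I_def by simp
    qed
  qed
  define G0 where "G0 r = (if 0 < r then G r else 0)" for r
  have G0m[measurable]: "G0 \<in> borel_measurable borel"
  proof (rule borel_measurableI_greater)
    fix a :: ennreal
    have "{x \<in> space borel. a < G0 x} = {x. 0 < x \<and> a < G x}" by (auto simp: G0_def)
    also have "\<dots> \<in> sets borel"
    proof (rule real_interval_borel_measurable)
      show "is_interval {x. 0 < x \<and> a < G x}"
        unfolding is_interval_1
      proof (intro ballI allI impI)
        fix u v x assume "u \<in> {x. 0 < x \<and> a < G x}" "v \<in> {x. 0 < x \<and> a < G x}" "u \<le> x \<and> x \<le> v"
        then show "x \<in> {x. 0 < x \<and> a < G x}" using Ganti[of x v] by auto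
      qed
    qed
    finally show "{x \<in> space borel. a < G0 x} \<in> sets borel" .
  qed
  have Smeas[measurable]: "S \<mu> \<in> sets lborel" for \<mu>
  proof -
    have "S \<mu> = {x\<in>space borel. ennreal \<mu> < G0 x}" by (auto simp: S_def G0_def)
    also have "\<dots> \<in> sets borel" by measurable
    finally show ?thesis by simp
  qed
  have Sfin: "emeasure lborel (S \<mu>) < \<infinity>" if mu: "0 < \<mu>" for \<mu>
  proof -
    have "emeasure lborel (S \<mu>) \<le> emeasure lborel {0<..2 * (\<mu> / 2) powr (1 - p) * b / \<mu>}"
      by (rule emeasure_mono[OF Sbound[OF mu]]) simp
    also have "\<dots> < \<infinity>" using mu b by simp
    finally show ?thesis .
  qed

  define Hn where "Hn n r = (if ennreal (1 / Suc n) < G0 r then enn2real (min (G0 r) (of_nat n)) else 0)" for n r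
  have Hm[measurable]: "Hn n \<in> borel_measurable borel" for n
    unfolding Hn_def by measurable
  have H0: "0 \<le> Hn n x" for n x unfolding Hn_def by simp
  have Hchar: "l < Hn n x \<longleftrightarrow> l < real n \<and> ennreal (max l (1 / Suc n)) < G0 x" if l: "0 < l" for l x n
  proof (cases "G0 x")
    case (real t)
    have m: "min (G0 x) (of_nat n) = ennreal (min t (real n))"
      unfolding real(1) by (cases "t \<le> real n") (auto simp: min_def ennreal_of_nat_eq_real_of_nat real(2))
    have "Hn n x = (if 1 / Suc n < t then min t (real n) else 0)"
      unfolding Hn_def m using real by (simp add: ennreal_less_iff)
    then show ?thesis using l real by (auto simp: ennreal_less_iff)
  next
    case top
    have "Hn n x = real n" unfolding Hn_def top by simp
    then show ?thesis using top by simp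
  qed
  have Hset: "{x. 0 < x \<and> l < Hn n x} = (if l < real n then S (max l (1 / Suc n)) else {})"
    if l: "0 < l" for l n
    using Hchar[OF l] by (auto simp: S_def G0_def)
  have Wn: "ennreal l * emeasure lborel {x. 0 < x \<and> l < Hn n x}
          \<le> (\<integral>\<^sup>+x. ennreal (g x) * indicator {x. 0 < x \<and> l < Hn n x} x \<partial>lborel)" if l: "0 < l" for l n
  proof (cases "l < real n")
    case True
    define \<mu> where "\<mu> = max l (1 / Suc n)"
    have mu: "0 < \<mu>" "l \<le> \<mu>" using l unfolding \<mu>_def by auto
    have "ennreal l * emeasure lborel (S \<mu>) \<le> ennreal \<mu> * emeasure lborel (S \<mu>)"
      using mu by (intro mult_right_mono ennreal_leI) auto
    also have "\<dots> \<le> (\<integral>\<^sup>+x. ennreal (g x) * indicator (S \<mu>) x \<partial>lborel)" by (rule Weak[OF mu(1)])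
    finally show ?thesis unfolding Hset[OF l] \<mu>_def using True by simp
  next
    case False
    then show ?thesis unfolding Hset[OF l] by simp
  qed
  have Hfin: "(\<integral>\<^sup>+x. ennreal (Hn n x powr p) * indicator {0<..} x \<partial>lborel) < \<infinity>" for n
  proof -
    have "(\<integral>\<^sup>+x. ennreal (Hn n x powr p) * indicator {0<..} x \<partial>lborel)
        \<le> (\<integral>\<^sup>+x. ennreal (real n powr p) * indicator (S (1 / Suc n)) x \<partial>lborel)"
    proof (rule nn_integral_mono)
      fix x
      show "ennreal (Hn n x powr p) * indicator {0<..} x \<le> ennreal (real n powr p) * indicator (S (1 / Suc n)) x"
      proof (cases "0 < x \<and> ennreal (1 / Suc n) < G0 x")
        case True
        then have xS: "x \<in> S (1 / Suc n)" by (auto simp: S_def G0_def)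
        have "Hn n x \<le> enn2real (of_nat n :: ennreal)"
          using True unfolding Hn_def
          by (simp only: if_True) (rule enn2real_mono, simp_all add: of_nat_less_top)
        then have "Hn n x \<le> real n" by simp
        then have "Hn n x powr p \<le> real n powr p" using p H0[of n x] by (intro powr_mono2) auto
        then show ?thesis using xS by (auto simp: indicator_def intro: ennreal_leI)
      next
        case False
        then have "Hn n x = 0 \<or> \<not> 0 < x" unfolding Hn_def by auto
        then show ?thesis by (auto simp: indicator_def)
      qed
    qed
    also have "\<dots> = ennreal (real n powr p) * emeasure lborel (S (1 / Suc n))"
      by (rule nn_integral_cmult_indicator) (rule Smeas)
    also have "\<dots> < \<infinity>" using Sfin[of "1 / Suc n"] by (simp add: ennreal_mult_less_top)
    finally show ?thesis .
  qed
  have Hbound: "(\<integral>\<^sup>+x. ennreal (Hn n x powr p) * indicator {0<..} x \<partial>lborel) \<le> ennreal ((p / (p - 1)) powr p) * B" for n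
    unfolding B_def by (rule young_step[OF p Hm gm H0 g0 Wn Hfin])

  define c where "c = ennreal ((p / (p - 1)) powr p)"
  have pw: "(SUP s\<in>{0<..}. ennreal (\<bar>min (1 / r) (1 / s) * (\<integral> t\<in>{0<..s}. f t \<partial>lborel)\<bar> powr p)) * indicator {0<..} r
      \<le> liminf (\<lambda>n. ennreal (Hn n r powr p) * indicator {0<..} r)" for r
  proof (cases "0 < r")
    case False
    then show ?thesis by simp
  next
    case r0: True
    have "(SUP s\<in>{0<..}. ennreal (\<bar>min (1 / r) (1 / s) * (\<integral> t\<in>{0<..s}. f t \<partial>lborel)\<bar> powr p))
        \<le> liminf (\<lambda>n. ennreal (Hn n r powr p))"
    proof (rule SUP_least)
      fix s :: real assume "s \<in> {0<..}"
      then have s: "0 < s" by simp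
      define t where "t = min (1 / r) (1 / s) * \<phi> s"
      have mpos: "0 < min (1 / r) (1 / s)" using r0 s by simp
      have t0: "0 \<le> t" unfolding t_def using mpos \<phi>0[of s] by simp
      have "\<bar>min (1 / r) (1 / s) * (\<integral> t\<in>{0<..s}. f t \<partial>lborel)\<bar> = min (1 / r) (1 / s) * \<bar>(\<integral> t\<in>{0<..s}. f t \<partial>lborel)\<bar>"
        using mpos by (simp add: abs_mult)
      also have "\<dots> \<le> t" unfolding t_def using mpos Fb[OF s] by (intro mult_left_mono) auto
      finally have "\<bar>min (1 / r) (1 / s) * (\<integral> t\<in>{0<..s}. f t \<partial>lborel)\<bar> powr p \<le> t powr p"
        using p by (intro powr_mono2) auto
      then have le1: "ennreal (\<bar>min (1 / r) (1 / s) * (\<integral> t\<in>{0<..s}. f t \<partial>lborel)\<bar> powr p) \<le> ennreal (t powr p)"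
        by (rule ennreal_leI)
      have "ennreal (t powr p) \<le> liminf (\<lambda>n. ennreal (Hn n r powr p))"
      proof (cases "t = 0")
        case True
        then show ?thesis by simp
      next
        case False
        then have tp: "0 < t" using t0 by simp
        obtain N :: nat where N: "max t (1 / t) \<le> real N" using real_arch_simple by blast
        show ?thesis
        proof (rule Liminf_bounded, rule eventually_sequentiallyI[of N])
          fix n assume n: "N \<le> n"
          have tN: "t \<le> real N" "1 / t \<le> real N" using N by auto
          have Nn: "real N \<le> real n" using n by simp
          have tn: "t \<le> real n" using tN Nn by linarith
          have "1 / t < real (Suc n)" using tN Nn by simp
          then have sn: "1 / real (Suc n) < t" using tp by (simp add: field_simps)
          have tG: "ennreal t \<le> G0 r" unfolding G0_def t_def using r0 Gle[OF s, of r] by simp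
          have "ennreal (1 / Suc n) < ennreal t" using sn by (subst ennreal_less_iff) auto
          then have lt: "ennreal (1 / Suc n) < G0 r" using tG by (rule less_le_trans)
          have "ennreal t \<le> min (G0 r) (of_nat n)"
            using tG tn by (simp add: ennreal_of_nat_eq_real_of_nat)
          then have "enn2real (ennreal t) \<le> enn2real (min (G0 r) (of_nat n))"
            by (rule enn2real_mono) (rule le_less_trans[OF min.cobounded2], simp add: of_nat_less_top)
          then have "t \<le> Hn n r" unfolding Hn_def using lt t0 by simp
          then have "t powr p \<le> Hn n r powr p" using p t0 by (intro powr_mono2) auto
          then show "ennreal (t powr p) \<le> ennreal (Hn n r powr p)" by (rule ennreal_leI)
        qed
      qed
      with le1 show "ennreal (\<bar>min (1 / r) (1 / s) * (\<integral> t\<in>{0<..s}. f t \<partial>lborel)\<bar> powr p)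
          \<le> liminf (\<lambda>n. ennreal (Hn n r powr p))" by (rule order.trans)
    qed
    then show ?thesis using r0 by simp
  qed
  have "(\<integral>\<^sup>+ r\<in>{0<..}.
            (SUP s\<in>{0<..}. ennreal (\<bar>min (1 / r) (1 / s) * (\<integral> t\<in>{0<..s}. f t \<partial>lborel)\<bar> powr p))
          \<partial>lborel) \<le> (\<integral>\<^sup>+ r. liminf (\<lambda>n. ennreal (Hn n r powr p) * indicator {0<..} r) \<partial>lborel)"
    by (rule nn_integral_mono) (rule pw)
  also have "\<dots> \<le> liminf (\<lambda>n. \<integral>\<^sup>+ r. ennreal (Hn n r powr p) * indicator {0<..} r \<partial>lborel)"
    by (rule nn_integral_liminf) measurable
  also have "\<dots> \<le> limsup (\<lambda>n. \<integral>\<^sup>+ r. ennreal (Hn n r powr p) * indicator {0<..} r \<partial>lborel)"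
    by (rule Liminf_le_Limsup) simp
  also have "\<dots> \<le> ennreal ((p / (p - 1)) powr p) * B"
    by (rule Limsup_bounded) (use Hbound in auto)
  finally show ?thesis unfolding B_eq .
qed

end
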